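(* Let $d\ge1$ be an integer, $\gamma^2>0$, $\sigma^2\ge 0$, and let there be $I$ client types with data sizes $D_1,\dots,D_I>0$. Let $\mathcal{K}$ be a non-empty coalition of participants containing $K_i\ge 0$ participants of type $i$ for each $i\in\{1,\dots,I\}$, with $K=\sum_{i=1}^I K_i\ge 1$, and let $\varepsilon_{\mathcal{K}}$ denote its generalization error. Let $n\notin\mathcal{K}$ be a client with data size $D>0$ and let $\varepsilon_{\mathcal{K}\cup\{n\}}$ be the generalization error of the coalition $\mathcal{K}\cup\{n\}$. Define $$\eta=\frac{(2K+1)\sum_{i=1}^I K_i/D_i}{K^2}-\frac{(K+1)\sigma^2}{d\gamma^2K}.$$ Then $\varepsilon_{\mathcal{K}}-\varepsilon_{\mathcal{K}\cup\{n\}}\ge 0$ if and only if $1/D\le\eta$.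
   Context: For a finite non-empty coalition $\mathcal{S}$ of participants, where participant $k$ has data size $D_k$, with $S=|\mathcal{S}|$, the generalization error of the federated model trained by $\mathcal{S}$ is defined as $\varepsilon_{\mathcal{S}}=\frac{d\gamma^2}{S^2}\sum_{k\in\mathcal{S}}\frac{1}{D_k}+\frac{S-1}{S}\sigma^2$. Here $d$ is the feature dimension, $\gamma^2$ the data (target-noise) variance and $\sigma^2$ the client variance. The quantity $\varepsilon_{\mathcal{K}}-\varepsilon_{\mathcal{K}\cup\{n\}}$ is called the network effect of client $n$'s participation. *)

theory Defs
  imports Complex_Main
begin

text \<open>Generalization error of the federated model trained by a finite coalition S,
  where participant k has data size Dsz k; d feature dimension, gamma2 = gamma^2 data variance,
  sigma2 = sigma^2 client variance.\<close>
definition gen_err :: "nat \<Rightarrow> real \<Rightarrow> real \<Rightarrow> ('a \<Rightarrow> real) \<Rightarrow> 'a set \<Rightarrow> real" where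
  "gen_err d gamma2 sigma2 Dsz S =
     real d * gamma2 / (real (card S))^2 * (\<Sum>k\<in>S. 1 / Dsz k)
     + (real (card S) - 1) / real (card S) * sigma2"

end

theory Submission
  imports Defs
begin

lemma key_id: "(K::real) > 0 \<Longrightarrow> c > 0 \<Longrightarrow> D > 0 \<Longrightarrow> c * A / K^2 + (K - 1) / K * sigma2 - (c * (A + 1/D) / (K+1)^2 + K / (K+1) * sigma2)
     = c / (K+1)^2 * (((2*K+1) * A / K^2 - (K+1) * sigma2 / (c * K)) - 1/D)"
proof -
  assume a: "K > 0" "c > 0" "D > 0"
  define L where "L = K + 1"
  have L: "L > 0" "K = L - 1" using a by (auto simp: L_def)
  show ?thesis unfolding L_def[symmetric] using a L
    apply (simp add: divide_simps power2_eq_square)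
    apply (simp add: algebra_simps)
    done
qed

theorem theorem1:
  fixes d I :: nat and gamma2 sigma2 D :: real
    and Dt :: "nat \<Rightarrow> real" and ctype :: "'a \<Rightarrow> nat" and Dsz :: "'a \<Rightarrow> real"
    and Kc :: "'a set" and n :: 'a
  assumes "d \<ge> 1" and "gamma2 > 0" and "sigma2 \<ge> 0"
    and "\<forall>i\<in>{1..I}. Dt i > 0"
    and "finite Kc" and "Kc \<noteq> {}"
    and "\<forall>k\<in>Kc. ctype k \<in> {1..I} \<and> Dsz k = Dt (ctype k)"
    and "n \<notin> Kc" and "D > 0" and "Dsz n = D"
  shows "(let K = real (card Kc);
              Ki = (\<lambda>i. real (card {k\<in>Kc. ctype k = i}));
              eta = (2 * K + 1) * (\<Sum>i=1..I. Ki i / Dt i) / K^2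
                    - (K + 1) * sigma2 / (real d * gamma2 * K)
          in (gen_err d gamma2 sigma2 Dsz Kc - gen_err d gamma2 sigma2 Dsz (insert n Kc) \<ge> 0
              \<longleftrightarrow> 1 / D \<le> eta))"
proof -
  define K where "K = real (card Kc)"
  define A where "A = (\<Sum>k\<in>Kc. 1 / Dsz k)"
  define c where "c = real d * gamma2"
  have Kpos: "K > 0" using assms(5,6) by (simp add: K_def card_gt_0_iff)
  have cpos: "c > 0" using assms(1,2) by (simp add: c_def)
  have grp: "(\<Sum>i=1..I. (\<Sum>k\<in>{k\<in>Kc. ctype k = i}. 1 / Dsz k)) = A"
    unfolding A_def using assms(5,7) by (intro sum.group) auto
  have inner: "(\<Sum>k\<in>{k\<in>Kc. ctype k = i}. 1 / Dsz k) = real (card {k\<in>Kc. ctype k = i}) / Dt i" for i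
  proof -
    have "(\<Sum>k\<in>{k\<in>Kc. ctype k = i}. 1 / Dsz k) = (\<Sum>k\<in>{k\<in>Kc. ctype k = i}. 1 / Dt i)"
      using assms(7) by (intro sum.cong) auto
    then show ?thesis by simp
  qed
  have A_eq: "(\<Sum>i=1..I. real (card {k\<in>Kc. ctype k = i}) / Dt i) = A"
    using grp inner by simp
  have e1: "gen_err d gamma2 sigma2 Dsz Kc = c * A / K^2 + (K - 1) / K * sigma2"
    unfolding gen_err_def A_def K_def c_def by simp
  have cardi: "card (insert n Kc) = card Kc + 1" using assms(5,8) by simp
  have e2: "gen_err d gamma2 sigma2 Dsz (insert n Kc) = c * (A + 1/D) / (K+1)^2 + K / (K+1) * sigma2"
    unfolding gen_err_def A_def K_def c_def using assms(5,8,10) cardi by (simp add: algebra_simps)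
  have key: "c * A / K^2 + (K - 1) / K * sigma2 - (c * (A + 1/D) / (K+1)^2 + K / (K+1) * sigma2)
     = c / (K+1)^2 * (((2*K+1) * A / K^2 - (K+1) * sigma2 / (c * K)) - 1/D)"
    using Kpos cpos assms(9) by (rule key_id)
  have pos: "c / (K+1)^2 > 0" using Kpos cpos by simp
  have "(0 \<le> c / (K+1)^2 * (((2*K+1) * A / K^2 - (K+1) * sigma2 / (c * K)) - 1/D))
      \<longleftrightarrow> 1/D \<le> (2*K+1) * A / K^2 - (K+1) * sigma2 / (c * K)"
    using pos zero_le_mult_iff[of "c / (K+1)^2"] by (simp only: diff_ge_0_iff_ge) (simp del: divide_le_0_iff)
  then show ?thesis
    unfolding Let_def using e1 e2 key A_eq by (simp add: K_def c_def)
qed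

end
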